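(* Causal graph dynamics are not necessarily monotonic: there exist sets $\Sigma,\Delta$, a finite set $\pi$ and a causal graph dynamics $F:\mathcal{G}_{\Sigma,\Delta,\pi}\to\mathcal{G}_{\Sigma,\Delta,\pi}$ and graphs $G\subseteq H$ with $F(G)\not\subseteq F(H)$.
   Context: Fix an uncountably infinite set $\mathcal{V}$ of vertex names. For sets $\Sigma,\Delta$ and a finite port set $\pi$, a graph $G$ consists of a countable $V(G)\subset\mathcal{V}$, a set $E(G)$ of pairwise disjoint two-element subsets of $V(G)\times\pi$, and partial labelings $\sigma(G):V(G)\rightharpoonup\Sigma$, $\delta(G):E(G)\rightharpoonup\Delta$; $\mathcal{G}_{\Sigma,\Delta,\pi}$ is the set of graphs. $G\subseteq H$ means componentwise inclusion of $V,E,\sigma,\delta$ (partial functions as sets of pairs). Graphs are consistent if their edge sets are jointly pairwise disjoint and labelings agree on common domains; union/intersection componentwise; $\varnothing$ empty graph. The disk $G^r_c=(H,c)$: $V(H)=B_G(c,r+1)$ (shortest-path ball), $E(H)$ the edges of $G$ with an endpoint in $B_G(c,r)$, $\sigma(H)=\sigma(G)|_{B_G(c,r)}$, $\delta(H)=\delta(G)|_{E(H)}$; $\mathcal{D}^r$ is the set of radius-$r$ disks. Renamings are bijections of $\mathcal{V}$ acting naturally on graphs and pointed graphs. A local rule of radius $r$ is $f:\mathcal{D}^r\to\mathcal{G}$ with: (1) for each renaming $R$ a renaming $R'$ with $f\circ R=R'\circ f$; (2) families of disks with empty intersection have images with empty intersection; (3) $|V(f(D))|$ uniformly bounded; (4)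 $f(G^r_u),f(G^r_v)$ consistent for all $G$ and $u,v\in V(G)$. A CGD is a map $F(G)=\bigcup_{v\in V(G)} f(G^r_v)$ for a local rule $f$. *)

theory Defs
  imports Main "HOL-Library.Countable_Set"
begin

text \<open>Graphs with vertex names of type 'v (the type plays the role of the fixed
uncountable name set), ports of type 'p (the port set pi is a finite subset),
vertex labels of type 's and edge labels of type 'd.\<close>

record ('v, 'p, 's, 'd) graph =
  gV :: "'v set"
  gE :: "('v \<times> 'p) set set"
  gsig :: "'v \<Rightarrow> 's option"
  gdel :: "('v \<times> 'p) set \<Rightarrow> 'd option"

definition is_graph :: "'s set \<Rightarrow> 'd set \<Rightarrow> 'p set \<Rightarrow> ('v, 'p, 's, 'd) graph \<Rightarrow> bool" where
  "is_graph Sig Del Pi G \<longleftrightarrow>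
     countable (gV G)
   \<and> (\<forall>e\<in>gE G. e \<subseteq> gV G \<times> Pi \<and> card e = 2)
   \<and> (\<forall>e\<in>gE G. \<forall>e'\<in>gE G. e \<noteq> e' \<longrightarrow> e \<inter> e' = {})
   \<and> dom (gsig G) \<subseteq> gV G \<and> ran (gsig G) \<subseteq> Sig
   \<and> dom (gdel G) \<subseteq> gE G \<and> ran (gdel G) \<subseteq> Del"

text \<open>Componentwise inclusion (partial functions as sets of pairs = map_le).\<close>
definition subgraph :: "('v, 'p, 's, 'd) graph \<Rightarrow> ('v, 'p, 's, 'd) graph \<Rightarrow> bool" where
  "subgraph G H \<longleftrightarrow> gV G \<subseteq> gV H \<and> gE G \<subseteq> gE H \<and> gsig G \<subseteq>\<^sub>m gsig H \<and> gdel G \<subseteq>\<^sub>m gdel H"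

definition consistent :: "('v, 'p, 's, 'd) graph \<Rightarrow> ('v, 'p, 's, 'd) graph \<Rightarrow> bool" where
  "consistent G H \<longleftrightarrow>
     (\<forall>e\<in>gE G \<union> gE H. \<forall>e'\<in>gE G \<union> gE H. e \<noteq> e' \<longrightarrow> e \<inter> e' = {})
   \<and> (\<forall>x\<in>dom (gsig G) \<inter> dom (gsig H). gsig G x = gsig H x)
   \<and> (\<forall>x\<in>dom (gdel G) \<inter> dom (gdel H). gdel G x = gdel H x)"

definition empty_graph :: "('v, 'p, 's, 'd) graph" where
  "empty_graph = \<lparr>gV = {}, gE = {}, gsig = Map.empty, gdel = Map.empty\<rparr>"

text \<open>Union of a family of graphs (componentwise; maps joined, which is the
set-theoretic union of their graphs whenever the family is consistent).\<close>
definition map_Union :: "('a \<Rightarrow> 'b option) set \<Rightarrow> 'a \<Rightarrow> 'b option" where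
  "map_Union M x = (if \<exists>m\<in>M. m x \<noteq> None then (SOME m. m \<in> M \<and> m x \<noteq> None) x else None)"

definition map_Inter :: "('a \<Rightarrow> 'b option) set \<Rightarrow> 'a \<Rightarrow> 'b option" where
  "map_Inter M x = (if \<exists>y. \<forall>m\<in>M. m x = Some y then Some (THE y. \<forall>m\<in>M. m x = Some y) else None)"

definition graph_Union :: "('v, 'p, 's, 'd) graph set \<Rightarrow> ('v, 'p, 's, 'd) graph" where
  "graph_Union S = \<lparr>gV = \<Union> (gV ` S), gE = \<Union> (gE ` S),
                    gsig = map_Union (gsig ` S), gdel = map_Union (gdel ` S)\<rparr>"

definition graph_Inter :: "('v, 'p, 's, 'd) graph set \<Rightarrow> ('v, 'p, 's, 'd) graph" where
  "graph_Inter S = \<lparr>gV = \<Inter> (gV ` S), gE = \<Inter> (gE ` S),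
                    gsig = map_Inter (gsig ` S), gdel = map_Inter (gdel ` S)\<rparr>"

definition adj :: "('v, 'p, 's, 'd) graph \<Rightarrow> 'v \<Rightarrow> 'v \<Rightarrow> bool" where
  "adj G u v \<longleftrightarrow> (\<exists>e\<in>gE G. \<exists>p q. e = {(u, p), (v, q)})"

fun ball :: "('v, 'p, 's, 'd) graph \<Rightarrow> 'v \<Rightarrow> nat \<Rightarrow> 'v set" where
  "ball G c 0 = {c}"
| "ball G c (Suc n) = ball G c n \<union> {v. \<exists>u\<in>ball G c n. adj G u v}"

definition disk :: "('v, 'p, 's, 'd) graph \<Rightarrow> 'v \<Rightarrow> nat \<Rightarrow> ('v, 'p, 's, 'd) graph \<times> 'v" where
  "disk G c r =
     (let Er = {e\<in>gE G. \<exists>(v, p)\<in>e. v \<in> ball G c r}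
      in (\<lparr>gV = ball G c (Suc r), gE = Er,
           gsig = gsig G |` ball G c r, gdel = gdel G |` Er\<rparr>, c))"

definition disks :: "'s set \<Rightarrow> 'd set \<Rightarrow> 'p set \<Rightarrow> nat \<Rightarrow> (('v, 'p, 's, 'd) graph \<times> 'v) set" where
  "disks Sig Del Pi r = {disk G c r | G c. is_graph Sig Del Pi G \<and> c \<in> gV G}"

definition ren_edge :: "('v \<Rightarrow> 'v) \<Rightarrow> ('v \<times> 'p) set \<Rightarrow> ('v \<times> 'p) set" where
  "ren_edge R e = (\<lambda>(v, p). (R v, p)) ` e"

definition ren_graph :: "('v \<Rightarrow> 'v) \<Rightarrow> ('v, 'p, 's, 'd) graph \<Rightarrow> ('v, 'p, 's, 'd) graph" where
  "ren_graph R G = \<lparr>gV = R ` gV G, gE = ren_edge R ` gE G,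
                    gsig = gsig G \<circ> inv R, gdel = gdel G \<circ> ren_edge (inv R)\<rparr>"

definition ren_pointed :: "('v \<Rightarrow> 'v) \<Rightarrow> ('v, 'p, 's, 'd) graph \<times> 'v \<Rightarrow> ('v, 'p, 's, 'd) graph \<times> 'v" where
  "ren_pointed R D = (ren_graph R (fst D), R (snd D))"

definition local_rule :: "'s set \<Rightarrow> 'd set \<Rightarrow> 'p set \<Rightarrow> nat
    \<Rightarrow> (('v, 'p, 's, 'd) graph \<times> 'v \<Rightarrow> ('v, 'p, 's, 'd) graph) \<Rightarrow> bool" where
  "local_rule Sig Del Pi r f \<longleftrightarrow>
     (\<forall>D\<in>disks Sig Del Pi r. is_graph Sig Del Pi (f D))
   \<and> (\<forall>R. bij R \<longrightarrow> (\<exists>R'. bij R' \<and> (\<forall>D\<in>disks Sig Del Pi r. f (ren_pointed R D) = ren_graph R' (f D))))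
   \<and> (\<forall>S. S \<noteq> {} \<and> S \<subseteq> disks Sig Del Pi r \<and> graph_Inter (fst ` S) = empty_graph
          \<longrightarrow> graph_Inter (f ` S) = empty_graph)
   \<and> (\<exists>b::nat. \<forall>D\<in>disks Sig Del Pi r. finite (gV (f D)) \<and> card (gV (f D)) \<le> b)
   \<and> (\<forall>G u v. is_graph Sig Del Pi G \<and> u \<in> gV G \<and> v \<in> gV G
          \<longrightarrow> consistent (f (disk G u r)) (f (disk G v r)))"

definition is_CGD :: "'s set \<Rightarrow> 'd set \<Rightarrow> 'p set
    \<Rightarrow> (('v, 'p, 's, 'd) graph \<Rightarrow> ('v, 'p, 's, 'd) graph) \<Rightarrow> bool" where
  "is_CGD Sig Del Pi F \<longleftrightarrow>
     (\<exists>r f. local_rule Sig Del Pi r f \<and>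
        (\<forall>G. is_graph Sig Del Pi G \<longrightarrow> F G = graph_Union ((\<lambda>v. f (disk G v r)) ` gV G)))"

end

theory Submission
  imports Defs
begin

definition fr :: "('v, nat, nat, nat) graph \<times> 'v \<Rightarrow> ('v, nat, nat, nat) graph" where
  "fr D = (if gsig (fst D) (snd D) = None
           then \<lparr>gV = {snd D}, gE = {}, gsig = Map.empty, gdel = Map.empty\<rparr>
           else empty_graph)"

lemma center_in_ball: "c \<in> ball G c n"
  by (induction n) auto

lemma fr_ren:
  assumes "bij R"
  shows "fr (ren_pointed R D) = ren_graph R (fr D)"
proof -
  have iv: "inv R (R x) = x" for x using assms by (simp add: bij_is_inj)
  have eq: "gsig (fst (ren_pointed R D)) (snd (ren_pointed R D)) = gsig (fst D) (snd D)"
    by (simp add: ren_pointed_def ren_graph_def iv)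
  show ?thesis
  proof (cases "gsig (fst D) (snd D) = None")
    case True
    with eq show ?thesis
      by (simp add: fr_def ren_graph_def ren_pointed_def comp_def)
  next
    case False
    with eq show ?thesis
      by (simp add: fr_def ren_graph_def ren_pointed_def empty_graph_def comp_def)
  qed
qed

lemma fr_V: "gV (fr D) \<subseteq> {snd D}"
  by (auto simp: fr_def empty_graph_def)

lemma fr_E[simp]: "gE (fr D) = {}" and fr_sig[simp]: "gsig (fr D) = Map.empty"
  and fr_del[simp]: "gdel (fr D) = Map.empty"
  by (auto simp: fr_def empty_graph_def)

lemma lr: "local_rule {0} {} {} 0 fr"
  unfolding local_rule_def
proof (intro conjI allI impI ballI)
  fix D :: "('v, nat, nat, nat) graph \<times> 'v"
  show "is_graph {0} {} {} (fr D)"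
  proof -
    have "countable (gV (fr D))" using fr_V[of D] countable_subset by blast
    then show ?thesis by (simp add: is_graph_def)
  qed
next
  fix R :: "'v \<Rightarrow> 'v" assume "bij R"
  then show "\<exists>R'. bij R' \<and> (\<forall>D\<in>disks {0} {} {} 0. fr (ren_pointed R D) = ren_graph R' (fr D))"
    using fr_ren by blast
next
  fix S :: "(('v, nat, nat, nat) graph \<times> 'v) set"
  assume a: "S \<noteq> {} \<and> S \<subseteq> disks {0} {} {} 0 \<and> graph_Inter (fst ` S) = empty_graph"
  have cin: "snd D \<in> gV (fst D)" if "D \<in> S" for D
  proof -
    from a that have "D \<in> disks {0} {} {} 0" by blast
    then obtain G c where "D = disk G c 0" unfolding disks_def by blast
    then show ?thesis by (simp add: disk_def Let_def center_in_ball del: ball.simps)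
  qed
  have V: "\<Inter> (gV ` fr ` S) = {}"
  proof (rule ccontr)
    assume "\<Inter> (gV ` fr ` S) \<noteq> {}"
    then obtain x where x: "\<forall>D\<in>S. x \<in> gV (fr D)" by auto
    have "\<forall>D\<in>S. x \<in> gV (fst D)"
    proof
      fix D assume "D \<in> S"
      with x fr_V[of D] have "x = snd D" by auto
      with cin \<open>D \<in> S\<close> show "x \<in> gV (fst D)" by simp
    qed
    then have "x \<in> gV (graph_Inter (fst ` S))" by (simp add: graph_Inter_def)
    with a show False by (simp add: empty_graph_def)
  qed
  have M: "map_Inter (M :: ('x \<Rightarrow> 'y option) set) = Map.empty" if "M = {Map.empty}" for M
    using that by (auto simp: map_Inter_def fun_eq_iff)
  have ne: "S \<noteq> {}" using a by blast
  have "gsig ` fr ` S = {Map.empty}" "gdel ` fr ` S = {Map.empty}" "gE ` fr ` S = {{}}"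
    using ne by (simp_all add: image_image image_constant_conv)
  then show "graph_Inter (fr ` S) = empty_graph"
    using V by (simp add: graph_Inter_def empty_graph_def M)
next
  show "\<exists>b::nat. \<forall>D\<in>disks {0} {} {} 0. finite (gV (fr D)) \<and> card (gV (fr D)) \<le> b"
  proof (intro exI ballI conjI)
    fix D :: "('v, nat, nat, nat) graph \<times> 'v"
    show "finite (gV (fr D))" using fr_V[of D] finite_subset by blast
    show "card (gV (fr D)) \<le> 1" using card_mono[OF _ fr_V[of D]] by simp
  qed
next
  fix G :: "('v, nat, nat, nat) graph" and u v
  show "consistent (fr (disk G u 0)) (fr (disk G v 0))"
    by (simp add: consistent_def)
qed

theorem proposition2p11:
  assumes "uncountable (UNIV :: 'v set)"
  shows "\<exists>(Sig :: nat set) (Del :: nat set) (Pi :: nat set)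
            (F :: ('v, nat, nat, nat) graph \<Rightarrow> ('v, nat, nat, nat) graph) G H.
           finite Pi \<and> is_CGD Sig Del Pi F
         \<and> is_graph Sig Del Pi G \<and> is_graph Sig Del Pi H
         \<and> subgraph G H \<and> \<not> subgraph (F G) (F H)"
proof -
  fix c :: 'v
  define F :: "('v, nat, nat, nat) graph \<Rightarrow> ('v, nat, nat, nat) graph" where
    "F G = graph_Union ((\<lambda>v. fr (disk G v 0)) ` gV G)" for G
  define G :: "('v, nat, nat, nat) graph" where
    "G = \<lparr>gV = {c}, gE = {}, gsig = Map.empty, gdel = Map.empty\<rparr>"
  define H :: "('v, nat, nat, nat) graph" where
    "H = \<lparr>gV = {c}, gE = {}, gsig = [c \<mapsto> 0], gdel = Map.empty\<rparr>"
  have cgd: "is_CGD {0} {} {} F"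
    unfolding is_CGD_def using lr F_def by blast
  have gG: "is_graph {0} {} {} G" by (simp add: is_graph_def G_def)
  have gH: "is_graph {0} {} {} H" by (simp add: is_graph_def H_def)
  have sub: "subgraph G H" by (simp add: subgraph_def G_def H_def map_le_def)
  have FG: "gV (F G) = {c}"
    by (simp add: F_def G_def graph_Union_def fr_def disk_def Let_def)
  have FH: "gV (F H) = {}"
    by (simp add: F_def H_def graph_Union_def fr_def disk_def Let_def empty_graph_def)
  have "\<not> subgraph (F G) (F H)" using FG FH by (simp add: subgraph_def)
  then show ?thesis using cgd gG gH sub by blast
qed

end
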